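(* For every integer $n\ge4$ there exists a real number $\alpha>0$ which is an infinite loop mod $n$.
   Context: For $\alpha$ with simple continued fraction $[a_0;a_1,\ldots]$, convergents $p_k/q_k$ are given by $p_{-1}=1,q_{-1}=0,p_0=a_0,q_0=1$, $p_k=a_kp_{k-1}+p_{k-2}$, $q_k=a_kq_{k-1}+q_{k-2}$, and semi-convergents are $(mp_k+p_{k-1})/(mq_k+q_{k-1})$ for $0\le m\le a_{k+1}$. A real $\alpha>0$ is an \emph{infinite loop mod $n$} if none of its semi-convergent denominators is divisible by $n$, except $q_{-1}=0$ (for rational $\alpha$, both finite expansions are considered and the expansion is regarded as ending with a partial quotient $\infty$, so all $m\ge0$ are allowed after the last convergent). *)

theory Defs
  imports Complex_Main
begin

text \<open>Partial quotients are a function a :: nat => nat (a 0 = a_0 >= 0 since alpha > 0;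
  a k >= 1 for k >= 1).  Index shift: cf_p a j = p_(j-1), cf_q a j = q_(j-1), so
  cf_p a 0 = p_(-1) = 1, cf_p a 1 = p_0 = a_0, cf_q a 0 = q_(-1) = 0, cf_q a 1 = q_0 = 1.\<close>

fun cf_p :: "(nat \<Rightarrow> nat) \<Rightarrow> nat \<Rightarrow> nat" where
  "cf_p a 0 = 1"
| "cf_p a (Suc 0) = a 0"
| "cf_p a (Suc (Suc j)) = a (Suc j) * cf_p a (Suc j) + cf_p a j"

fun cf_q :: "(nat \<Rightarrow> nat) \<Rightarrow> nat \<Rightarrow> nat" where
  "cf_q a 0 = 0"
| "cf_q a (Suc 0) = 1"
| "cf_q a (Suc (Suc j)) = a (Suc j) * cf_q a (Suc j) + cf_q a j"

definition finite_cf_expansion :: "(nat \<Rightarrow> nat) \<Rightarrow> nat \<Rightarrow> real \<Rightarrow> bool" where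
  "finite_cf_expansion a K \<alpha> \<longleftrightarrow>
     (\<forall>k. 1 \<le> k \<and> k \<le> K \<longrightarrow> 1 \<le> a k) \<and>
     \<alpha> = real (cf_p a (K + 1)) / real (cf_q a (K + 1))"

definition infinite_cf_expansion :: "(nat \<Rightarrow> nat) \<Rightarrow> real \<Rightarrow> bool" where
  "infinite_cf_expansion a \<alpha> \<longleftrightarrow>
     (\<forall>k\<ge>1. 1 \<le> a k) \<and>
     (\<lambda>k. real (cf_p a (k + 1)) / real (cf_q a (k + 1))) \<longlonglongrightarrow> \<alpha>"

definition semiconv_den :: "(nat \<Rightarrow> nat) \<Rightarrow> nat \<Rightarrow> nat \<Rightarrow> nat" where
  "semiconv_den a k m = m * cf_q a (k + 1) + cf_q a k"

text \<open>No semi-convergent denominator (other than q_(-1) = 0, i.e. k = 0, m = 0) is divisible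
  by n, for every expansion of alpha (both finite ones if alpha is rational; after the last
  convergent q_K, the partial quotient is infinite so all m >= 0 are allowed).\<close>
definition infinite_loop_mod :: "nat \<Rightarrow> real \<Rightarrow> bool" where
  "infinite_loop_mod n \<alpha> \<longleftrightarrow>
     (\<forall>a. infinite_cf_expansion a \<alpha> \<longrightarrow>
        (\<forall>k m. m \<le> a (k + 1) \<and> (k, m) \<noteq> (0, 0) \<longrightarrow> \<not> n dvd semiconv_den a k m)) \<and>
     (\<forall>a K. finite_cf_expansion a K \<alpha> \<longrightarrow>
        (\<forall>k m. k \<le> K \<and> (k < K \<longrightarrow> m \<le> a (k + 1)) \<and> (k, m) \<noteq> (0, 0) \<longrightarrow>
           \<not> n dvd semiconv_den a k m))"

end

theory Submission imports Defs begin

lemma cf_shift_aux: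
  "(cf_p a (Suc j) = a 0 * cf_p (\<lambda>i. a (Suc i)) j + cf_q (\<lambda>i. a (Suc i)) j \<and>
    cf_q a (Suc j) = cf_p (\<lambda>i. a (Suc i)) j) \<and>
   (cf_p a (Suc (Suc j)) = a 0 * cf_p (\<lambda>i. a (Suc i)) (Suc j) + cf_q (\<lambda>i. a (Suc i)) (Suc j) \<and>
    cf_q a (Suc (Suc j)) = cf_p (\<lambda>i. a (Suc i)) (Suc j))"
proof (induction j)
  case 0
  then show ?case by simp
next
  case (Suc j)
  have IH: "cf_p a (Suc j) = a 0 * cf_p (\<lambda>i. a (Suc i)) j + cf_q (\<lambda>i. a (Suc i)) j"
    "cf_q a (Suc j) = cf_p (\<lambda>i. a (Suc i)) j"
    "cf_p a (Suc (Suc j)) = a 0 * cf_p (\<lambda>i. a (Suc i)) (Suc j) + cf_q (\<lambda>i. a (Suc i)) (Suc j)"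
    "cf_q a (Suc (Suc j)) = cf_p (\<lambda>i. a (Suc i)) (Suc j)" using Suc by auto
  have e1: "cf_p a (Suc (Suc (Suc j))) = a (Suc (Suc j)) * cf_p a (Suc (Suc j)) + cf_p a (Suc j)"
    "cf_q a (Suc (Suc (Suc j))) = a (Suc (Suc j)) * cf_q a (Suc (Suc j)) + cf_q a (Suc j)"
    "cf_p (\<lambda>i. a (Suc i)) (Suc (Suc j)) = a (Suc (Suc j)) * cf_p (\<lambda>i. a (Suc i)) (Suc j) + cf_p (\<lambda>i. a (Suc i)) j"
    "cf_q (\<lambda>i. a (Suc i)) (Suc (Suc j)) = a (Suc (Suc j)) * cf_q (\<lambda>i. a (Suc i)) (Suc j) + cf_q (\<lambda>i. a (Suc i)) j"
    by simp_all
  show ?case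
    apply (intro conjI)
    using IH apply simp
    using IH apply simp
    apply (simp only: e1 IH(3) IH(4) IH(1) IH(2)) apply (simp add: algebra_simps)
    apply (simp only: e1 IH(3) IH(4) IH(1) IH(2))
    done
qed

lemma cf_shift:
  "cf_p a (Suc j) = a 0 * cf_p (\<lambda>i. a (Suc i)) j + cf_q (\<lambda>i. a (Suc i)) j"
  "cf_q a (Suc j) = cf_p (\<lambda>i. a (Suc i)) j"
  using cf_shift_aux[of a j] by auto

lemma cf_bounds:
  "(\<forall>k. 1 \<le> k \<and> k < j \<longrightarrow> 1 \<le> b k) \<Longrightarrow> 1 \<le> j \<Longrightarrow>
   1 \<le> cf_q b j \<and> b 0 * cf_q b j \<le> cf_p b j \<and> cf_p b j \<le> (b 0 + 1) * cf_q b j"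
proof (induction b j rule: cf_q.induct)
  case (1 a)
  then show ?case by simp
next
  case (2 a)
  then show ?case by simp
next
  case (3 a j)
  have h1: "1 \<le> a (Suc j)" using 3(3) by auto
  show ?case
  proof (cases j)
    case 0
    then show ?thesis using h1 by (simp add: algebra_simps)
  next
    case (Suc j')
    have A: "1 \<le> cf_q a (Suc j) \<and> a 0 * cf_q a (Suc j) \<le> cf_p a (Suc j) \<and> cf_p a (Suc j) \<le> (a 0 + 1) * cf_q a (Suc j)"
      using 3 by auto
    have B: "1 \<le> cf_q a j \<and> a 0 * cf_q a j \<le> cf_p a j \<and> cf_p a j \<le> (a 0 + 1) * cf_q a j"
      using 3 Suc by auto
    let ?x = "a (Suc j)"
    have "a 0 * (?x * cf_q a (Suc j) + cf_q a j) = ?x * (a 0 * cf_q a (Suc j)) + a 0 * cf_q a j"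
      by (simp add: algebra_simps)
    also have "\<dots> \<le> ?x * cf_p a (Suc j) + cf_p a j"
      using A B by (intro add_mono mult_le_mono2) auto
    finally have C: "a 0 * (?x * cf_q a (Suc j) + cf_q a j) \<le> ?x * cf_p a (Suc j) + cf_p a j" .
    have "?x * cf_p a (Suc j) + cf_p a j \<le> ?x * ((a 0 + 1) * cf_q a (Suc j)) + (a 0 + 1) * cf_q a j"
      using A B by (intro add_mono mult_le_mono2) auto
    also have "\<dots> = (a 0 + 1) * (?x * cf_q a (Suc j) + cf_q a j)"
      by (simp add: algebra_simps)
    finally have D: "?x * cf_p a (Suc j) + cf_p a j \<le> (a 0 + 1) * (?x * cf_q a (Suc j) + cf_q a j)" .
    have E: "1 \<le> ?x * cf_q a (Suc j) + cf_q a j" using B by simp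
    show ?thesis using C D E by simp
  qed
qed

lemma h_div1: "(p::real) \<le> (x + 1) * q \<Longrightarrow> 0 < p \<Longrightarrow> 0 \<le> x \<Longrightarrow> 1 / (x + 1) \<le> q / p"
  by (simp add: divide_simps mult.commute)
lemma h_div2: "(c + 2) * q \<le> (c + 1) * (p::real) \<Longrightarrow> 0 < p \<Longrightarrow> 0 \<le> c \<Longrightarrow>  q / p \<le> (c + 1) / (c + 2)"
  by (simp add: divide_simps mult.commute)

lemma cf_conv_shift:
  assumes "0 < cf_p (\<lambda>i. a (Suc i)) j"
  shows "real (cf_p a (Suc j)) / real (cf_q a (Suc j)) =
         real (a 0) + real (cf_q (\<lambda>i. a (Suc i)) j) / real (cf_p (\<lambda>i. a (Suc i)) j)"
  using assms by (simp add: cf_shift field_simps)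

lemma cf_all_bounds:
  assumes "\<forall>k\<ge>1. 1 \<le> b k" "1 \<le> j"
  shows "1 \<le> cf_q b j \<and> b 0 * cf_q b j \<le> cf_p b j \<and> cf_p b j \<le> (b 0 + 1) * cf_q b j"
  using cf_bounds[of j b] assms by auto

lemma exp_bounds:
  assumes "infinite_cf_expansion a \<alpha>"
  shows "real (a 0) < \<alpha> \<and> \<alpha> < real (a 0) + 1"
proof -
  define b where "b = (\<lambda>i. a (Suc i))"
  have apos: "\<forall>k\<ge>1. 1 \<le> a k" and lim: "(\<lambda>k. real (cf_p a (k + 1)) / real (cf_q a (k + 1))) \<longlonglongrightarrow> \<alpha>"
    using assms unfolding infinite_cf_expansion_def by auto
  have bpos: "\<forall>k. 1 \<le> b k" using apos unfolding b_def by auto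
  have low: "real (a 0) + 1 / (real (a 1) + 1) \<le> real (cf_p a (k + 1)) / real (cf_q a (k + 1))"
    if "k \<ge> 1" for k
  proof -
    have B: "1 \<le> cf_q b k \<and> b 0 * cf_q b k \<le> cf_p b k \<and> cf_p b k \<le> (b 0 + 1) * cf_q b k"
      using cf_all_bounds[of b k] bpos that by auto
    have p0: "0 < cf_p b k" using B bpos[rule_format, of 0]
      by (metis le_trans mult_le_mono1 mult_1 not_le less_one)
    have e: "real (cf_p a (k + 1)) / real (cf_q a (k + 1)) = real (a 0) + real (cf_q b k) / real (cf_p b k)"
      using cf_conv_shift[of a k] p0 unfolding b_def by simp
    have "real (cf_p b k) \<le> (real (a 1) + 1) * real (cf_q b k)"
      proof -
      have "real (cf_p b k) \<le> real ((b 0 + 1) * cf_q b k)" using B by (simp only: of_nat_le_iff)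
      then show ?thesis unfolding b_def by (simp add: distrib_right)
    qed
    then have "1 / (real (a 1) + 1) \<le> real (cf_q b k) / real (cf_p b k)"
      using p0 by (intro h_div1) auto
    then show ?thesis using e by simp
  qed
  have up: "real (cf_p a (k + 1)) / real (cf_q a (k + 1)) \<le> real (a 0) + (real (a 2) + 1) / (real (a 2) + 2)"
    if "k \<ge> 2" for k
  proof -
    define k' where "k' = k - 1"
    have k': "k = Suc k'" "k' \<ge> 1" using that unfolding k'_def by auto
    define c where "c = (\<lambda>i. b (Suc i))"
    have cpos: "\<forall>k. 1 \<le> c k" using bpos unfolding c_def by auto
    have C: "1 \<le> cf_q c k' \<and> c 0 * cf_q c k' \<le> cf_p c k' \<and> cf_p c k' \<le> (c 0 + 1) * cf_q c k'"
      using cf_all_bounds[of c k'] cpos k' by auto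
    have bp: "cf_p b k = b 0 * cf_p c k' + cf_q c k'" "cf_q b k = cf_p c k'"
      using cf_shift[of b k'] k' unfolding c_def by auto
    have p0: "0 < cf_p b k" using bp C by simp
    have e: "real (cf_p a (k + 1)) / real (cf_q a (k + 1)) = real (a 0) + real (cf_q b k) / real (cf_p b k)"
      using cf_conv_shift[of a k] p0 unfolding b_def by simp
    have c0: "c 0 = a 2" unfolding c_def b_def by (simp add: numeral_2_eq_2)
    have b0: "1 \<le> b 0" using bpos by auto
    have "(c 0 + 2) * cf_p c k' = (c 0 + 1) * cf_p c k' + cf_p c k'" by (simp add: algebra_simps)
    also have "\<dots> \<le> (c 0 + 1) * (b 0 * cf_p c k') + (c 0 + 1) * cf_q c k'"
      using C b0 by (intro add_mono mult_le_mono2) auto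
    also have "\<dots> = (c 0 + 1) * cf_p b k" using bp by (simp add: algebra_simps)
    finally have N: "(c 0 + 2) * cf_q b k \<le> (c 0 + 1) * cf_p b k" using bp by simp
    have "(real (c 0) + 2) * real (cf_q b k) \<le> (real (c 0) + 1) * real (cf_p b k)"
      proof -
      have "real ((c 0 + 2) * cf_q b k) \<le> real ((c 0 + 1) * cf_p b k)" using N by (simp only: of_nat_le_iff)
      then show ?thesis by (simp add: distrib_right)
    qed
    then have "real (cf_q b k) / real (cf_p b k) \<le> (real (c 0) + 1) / (real (c 0) + 2)"
      using p0 by (intro h_div2) auto
    then show ?thesis using e c0 by simp
  qed
  have L: "real (a 0) + 1 / (real (a 1) + 1) \<le> \<alpha>"
    by (rule LIMSEQ_le_const[OF lim]) (use low in auto)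
  have U: "\<alpha> \<le> real (a 0) + (real (a 2) + 1) / (real (a 2) + 2)"
    by (rule LIMSEQ_le_const2[OF lim]) (use up in auto)
  have "0 < 1 / (real (a 1) + 1)" by simp
  moreover have "(real (a 2) + 1) / (real (a 2) + 2) < 1" by simp
  ultimately show ?thesis using L U by linarith
qed

lemma exp_tail:
  assumes "infinite_cf_expansion a \<alpha>"
  shows "infinite_cf_expansion (\<lambda>i. a (Suc i)) (1 / (\<alpha> - real (a 0)))"
proof -
  define b where "b = (\<lambda>i. a (Suc i))"
  have apos: "\<forall>k\<ge>1. 1 \<le> a k" and lim: "(\<lambda>k. real (cf_p a (k + 1)) / real (cf_q a (k + 1))) \<longlonglongrightarrow> \<alpha>"
    using assms unfolding infinite_cf_expansion_def by auto
  have bpos: "\<forall>k. 1 \<le> b k" using apos unfolding b_def by auto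
  have ne: "\<alpha> - real (a 0) \<noteq> 0" using exp_bounds[OF assms] by simp
  have eq: "real (cf_p b (k + 1)) / real (cf_q b (k + 1)) =
            1 / (real (cf_p a (Suc k + 1)) / real (cf_q a (Suc k + 1)) - real (a 0))" for k
  proof -
    have B: "1 \<le> cf_q b (k+1) \<and> b 0 * cf_q b (k+1) \<le> cf_p b (k+1)"
      using cf_all_bounds[of b "k+1"] bpos by auto
    have p0: "0 < cf_p b (k+1)" using B bpos[rule_format, of 0]
      by (metis le_trans mult_le_mono1 mult_1 not_le less_one)
    have e: "real (cf_p a (Suc k + 1)) / real (cf_q a (Suc k + 1)) = real (a 0) + real (cf_q b (k+1)) / real (cf_p b (k+1))"
      using cf_conv_shift[of a "k+1"] p0 unfolding b_def by simp
    show ?thesis using e B p0 by simp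
  qed
  have lim2: "(\<lambda>k. real (cf_p a (Suc k + 1)) / real (cf_q a (Suc k + 1))) \<longlonglongrightarrow> \<alpha>"
    using LIMSEQ_Suc[OF lim] by simp
  have "(\<lambda>k. 1 / (real (cf_p a (Suc k + 1)) / real (cf_q a (Suc k + 1)) - real (a 0))) \<longlonglongrightarrow> 1 / (\<alpha> - real (a 0))"
    by (intro tendsto_intros lim2 ne)
  then have "(\<lambda>k. real (cf_p b (k + 1)) / real (cf_q b (k + 1))) \<longlonglongrightarrow> 1 / (\<alpha> - real (a 0))"
    using eq by simp
  then show ?thesis using bpos unfolding infinite_cf_expansion_def b_def by auto
qed

lemma exp_a0_unique:
  assumes "infinite_cf_expansion a \<alpha>" "infinite_cf_expansion b \<alpha>"
  shows "a 0 = b 0"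
proof -
  have "real (a 0) < real (b 0 + 1)" "real (b 0) < real (a 0 + 1)"
    using exp_bounds[OF assms(1)] exp_bounds[OF assms(2)] by auto
  then have "a 0 < b 0 + 1" "b 0 < a 0 + 1" by (simp_all only: of_nat_less_iff)
  then show ?thesis by simp
qed

lemma exp_unique:
  "infinite_cf_expansion a \<alpha> \<Longrightarrow> infinite_cf_expansion b \<alpha> \<Longrightarrow> a k = b k"
proof (induction k arbitrary: a b \<alpha>)
  case 0
  then show ?case using exp_a0_unique by blast
next
  case (Suc k)
  have e: "a 0 = b 0" using exp_a0_unique[OF Suc.prems] .
  have "infinite_cf_expansion (\<lambda>i. a (Suc i)) (1 / (\<alpha> - real (a 0)))"
    "infinite_cf_expansion (\<lambda>i. b (Suc i)) (1 / (\<alpha> - real (a 0)))"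
    using exp_tail[OF Suc.prems(1)] exp_tail[OF Suc.prems(2)] e by auto
  from Suc.IH[OF this] show ?case by simp
qed

lemma exp_irrat:
  "infinite_cf_expansion a \<alpha> \<Longrightarrow> \<alpha> = real P / real Q \<Longrightarrow> 0 < Q \<Longrightarrow> False"
proof (induction Q arbitrary: P a \<alpha> rule: less_induct)
  case (less Q)
  have B: "real (a 0) < real P / real Q" "real P / real Q < real (a 0) + 1"
    using exp_bounds[OF less.prems(1)] less.prems(2) by auto
  have Qp: "0 < real Q" using less.prems(3) by simp
  have "real (a 0) * real Q < real P" "real P < (real (a 0) + 1) * real Q"
    using B Qp by (simp_all add: field_simps)
  then have "real (a 0 * Q) < real P" "real P < real ((a 0 + 1) * Q)" by (simp_all add: algebra_simps)
  then have N: "a 0 * Q < P" "P < (a 0 + 1) * Q" by (simp_all only: of_nat_less_iff)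
  define Q' where "Q' = P - a 0 * Q"
  have Q'1: "0 < Q'" "Q' < Q" using N unfolding Q'_def by (simp_all add: algebra_simps)
  have rQ': "real Q' = real P - real (a 0) * real Q" unfolding Q'_def using N
    by (simp add: of_nat_diff)
  have "\<alpha> - real (a 0) = real Q' / real Q"
    using less.prems(2) Qp rQ' by (simp add: field_simps)
  then have "1 / (\<alpha> - real (a 0)) = real Q / real Q'" by simp
  then show False by (rule less.IH[OF Q'1(2) exp_tail[OF less.prems(1)] _ Q'1(1)])
qed

lemma cf_det:
  "real (cf_p a (Suc j)) * real (cf_q a j) - real (cf_p a j) * real (cf_q a (Suc j)) = (-1) ^ Suc j"
proof (induction j)
  case 0
  then show ?case by simp
next
  case (Suc j)
  have "real (cf_p a (Suc (Suc j))) * real (cf_q a (Suc j)) - real (cf_p a (Suc j)) * real (cf_q a (Suc (Suc j)))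
     = - (real (cf_p a (Suc j)) * real (cf_q a j) - real (cf_p a j) * real (cf_q a (Suc j)))"
    by (simp only: cf_p.simps cf_q.simps of_nat_add of_nat_mult) (simp add: algebra_simps)
  then show ?case using Suc by simp
qed

lemma cf_q_grow:
  assumes "\<forall>k\<ge>1. 1 \<le> a k"
  shows "j \<le> cf_q a (Suc j)"
proof (induction j)
  case 0
  then show ?case by simp
next
  case (Suc j)
  show ?case
  proof (cases j)
    case 0
    then show ?thesis using assms by simp
  next
    case (Suc j')
    have "1 \<le> cf_q a j" using cf_all_bounds[OF assms, of j] Suc by simp
    moreover have "1 \<le> a (Suc j)" using assms by simp
    ultimately have "cf_q a (Suc j) + 1 \<le> a (Suc j) * cf_q a (Suc j) + cf_q a j"
      by (metis add_mono mult_1 mult_le_mono1)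
    then show ?thesis using Suc.IH by simp
  qed
qed

lemma cf_q_mono:
  assumes "\<forall>k\<ge>1. 1 \<le> a k"
  shows "cf_q a (Suc j) \<le> cf_q a (Suc (Suc j))"
proof -
  have "1 \<le> a (Suc j)" using assms by simp
  then have "1 * cf_q a (Suc j) \<le> a (Suc j) * cf_q a (Suc j)" by (rule mult_le_mono1)
  then show ?thesis by (simp only: cf_q.simps)
qed

lemma exp_exists:
  assumes apos: "\<forall>k\<ge>1. 1 \<le> a k"
  shows "\<exists>\<alpha>. infinite_cf_expansion a \<alpha>"
proof -
  define q where "q = (\<lambda>k. real (cf_q a (Suc k)))"
  define t where "t = (\<lambda>k. inverse (q k * q (Suc k)))"
  define c where "c = (\<lambda>k. real (cf_p a (k + 1)) / real (cf_q a (k + 1)))"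
  have q1: "1 \<le> q k" for k using cf_all_bounds[OF apos, of "Suc k"] unfolding q_def by simp
  have qmono: "q k \<le> q (Suc k)" for k unfolding q_def of_nat_le_iff by (rule cf_q_mono[OF apos])
  have qgrow: "real k \<le> q k" for k using cf_q_grow[OF apos, of k] unfolding q_def by simp
  have "LIM k sequentially. q k * q (Suc k) :> at_top"
  proof (rule filterlim_at_top_mono[OF filterlim_real_sequentially])
    show "\<forall>\<^sub>F x in sequentially. real x \<le> q x * q (Suc x)"
    proof (rule always_eventually, rule allI)
      fix x
      have "real x * 1 \<le> q x * q (Suc x)"
        using qgrow[of x] q1[of "Suc x"] by (intro mult_mono) auto
      then show "real x \<le> q x * q (Suc x)" by simp
    qed
  qed
  then have t0: "t \<longlonglongrightarrow> 0" unfolding t_def by (rule tendsto_inverse_0_at_top)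
  have tmono: "monoseq t"
  proof (rule mono_SucI2, rule allI)
    fix k
    have "q k * q (Suc k) \<le> q (Suc k) * q (Suc (Suc k))"
    proof -
      have "q k \<le> q (Suc (Suc k))" using qmono[of k] qmono[of "Suc k"] by linarith
      then have "q (Suc k) * q k \<le> q (Suc k) * q (Suc (Suc k))"
        using q1[of "Suc k"] by (intro mult_left_mono) auto
      then show ?thesis by (simp add: mult.commute)
    qed
    moreover have "0 < q k * q (Suc k)" using q1[of k] q1[of "Suc k"] by simp
    ultimately show "t (Suc k) \<le> t k" unfolding t_def
      by (rule le_imp_inverse_le)
  qed
  have summ: "summable (\<lambda>k. (-1) ^ k * t k)" by (rule summable_Leibniz(1)[OF t0 tmono])
  have step: "c (Suc k) - c k = (-1) ^ k * t k" for k
  proof -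
    have d: "real (cf_p a (Suc (Suc k))) * real (cf_q a (Suc k)) - real (cf_p a (Suc k)) * real (cf_q a (Suc (Suc k))) = (-1) ^ k"
      using cf_det[of a "Suc k"] by simp
    have nz: "real (cf_q a (Suc k)) \<noteq> 0" "real (cf_q a (Suc (Suc k))) \<noteq> 0"
      using q1[of k] q1[of "Suc k"] unfolding q_def by auto
    have "c (Suc k) - c k = (real (cf_p a (Suc (Suc k))) * real (cf_q a (Suc k)) - real (cf_p a (Suc k)) * real (cf_q a (Suc (Suc k))))
          / (real (cf_q a (Suc k)) * real (cf_q a (Suc (Suc k))))"
    proof -
      have "c (Suc k) - c k = real (cf_p a (Suc (Suc k))) / real (cf_q a (Suc (Suc k))) - real (cf_p a (Suc k)) / real (cf_q a (Suc k))"
        unfolding c_def by simp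
      also have "\<dots> = (real (cf_p a (Suc (Suc k))) * real (cf_q a (Suc k)) - real (cf_p a (Suc k)) * real (cf_q a (Suc (Suc k))))
          / (real (cf_q a (Suc (Suc k))) * real (cf_q a (Suc k)))"
        by (rule diff_frac_eq[OF nz(2) nz(1)])
      finally show ?thesis by (simp only: mult.commute)
    qed
    also have "\<dots> = (-1) ^ k * t k" unfolding d t_def q_def by (simp add: divide_inverse)
    finally show ?thesis .
  qed
  have csum: "c k = c 0 + (\<Sum>i<k. (-1) ^ i * t i)" for k
  proof (induction k)
    case 0 then show ?case by simp
  next
    case (Suc k)
    have "c (Suc k) = c k + (-1) ^ k * t k" using step[of k] by linarith
    then show ?case using Suc.IH by (simp only: sum.lessThan_Suc)
  qed
  have ceq: "(\<lambda>k. c 0 + (\<Sum>i<k. (-1) ^ i * t i)) = c" by (rule ext) (rule csum[symmetric])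
  have "(\<lambda>k. c 0 + (\<Sum>i<k. (-1) ^ i * t i)) \<longlonglongrightarrow> c 0 + suminf (\<lambda>k. (-1) ^ k * t k)"
    by (intro tendsto_add tendsto_const summable_LIMSEQ summ)
  then have "c \<longlonglongrightarrow> c 0 + suminf (\<lambda>k. (-1) ^ k * t k)" unfolding ceq .
  then show ?thesis unfolding infinite_cf_expansion_def c_def using apos by blast
qed

lemma nat_aux1: "(x::nat) \<le> y \<Longrightarrow> x = 2 * (y + q) \<Longrightarrow> 1 \<le> x \<Longrightarrow> False" by presburger

lemma half_class:
  assumes "finite_cf_expansion a K (1/2)"
  shows "(K = 1 \<and> a 1 = 2) \<or> (K = 2 \<and> a 1 = 1 \<and> a 2 = 1)"
proof -
  have pos: "\<forall>k. 1 \<le> k \<and> k \<le> K \<longrightarrow> 1 \<le> a k"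
    and eq: "(1/2::real) = real (cf_p a (K + 1)) / real (cf_q a (K + 1))"
    using assms unfolding finite_cf_expansion_def by auto
  show ?thesis
  proof (cases K)
    case 0
    then have "real (a 0) = 1/2" using eq by simp
    then have "real (2 * a 0) = real (1::nat)" by simp
    then have "2 * a 0 = 1" by (simp only: of_nat_eq_iff)
    then show ?thesis by arith
  next
    case (Suc K1)
    define b where "b = (\<lambda>i. a (Suc i))"
    have sh: "cf_p a (K + 1) = a 0 * cf_p b (K1 + 1) + cf_q b (K1 + 1)" "cf_q a (K + 1) = cf_p b (K1 + 1)"
      using cf_shift[of a "K1 + 1"] Suc unfolding b_def by auto
    have bb: "1 \<le> cf_q b (K1+1) \<and> b 0 * cf_q b (K1+1) \<le> cf_p b (K1+1)"
      using cf_bounds[of "K1+1" b] pos Suc unfolding b_def by auto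
    have b0: "1 \<le> b 0" using pos Suc unfolding b_def by auto
    have "1 * 1 \<le> b 0 * cf_q b (K1+1)" using bb b0 by (intro mult_le_mono) auto
    then have p1: "1 \<le> cf_p b (K1+1)" using bb by linarith
    have "real (cf_p b (K1+1)) = 2 * (real (a 0) * real (cf_p b (K1+1)) + real (cf_q b (K1+1)))"
      using eq sh p1 by (simp add: field_simps)
    then have "real (cf_p b (K1+1)) = real (2 * (a 0 * cf_p b (K1+1) + cf_q b (K1+1)))" by simp
    then have E: "cf_p b (K1+1) = 2 * (a 0 * cf_p b (K1+1) + cf_q b (K1+1))" by (simp only: of_nat_eq_iff)
    have a00: "a 0 = 0"
    proof (rule ccontr)
      assume "a 0 \<noteq> 0"
      then have "1 * cf_p b (K1+1) \<le> a 0 * cf_p b (K1+1)" by (intro mult_le_mono1) auto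
      then have "cf_p b (K1+1) \<le> a 0 * cf_p b (K1+1)" by simp
      then show False using E p1 by (rule nat_aux1)
    qed
    have E2: "cf_p b (K1+1) = 2 * cf_q b (K1+1)" using E a00 by simp
    show ?thesis
    proof (cases K1)
      case 0
      then have "b 0 = 2" using E2 by simp
      then show ?thesis using Suc 0 unfolding b_def by simp
    next
      case (Suc K2)
      define c where "c = (\<lambda>i. b (Suc i))"
      have sh2: "cf_p b (K1 + 1) = b 0 * cf_p c (K2 + 1) + cf_q c (K2 + 1)" "cf_q b (K1 + 1) = cf_p c (K2 + 1)"
        using cf_shift[of b "K2 + 1"] Suc unfolding c_def by auto
      have cb: "1 \<le> cf_q c (K2+1) \<and> c 0 * cf_q c (K2+1) \<le> cf_p c (K2+1)"
        using cf_bounds[of "K2+1" c] pos Suc \<open>K = Suc K1\<close> unfolding c_def b_def by auto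
      have c0: "1 \<le> c 0" using pos Suc \<open>K = Suc K1\<close> unfolding c_def b_def by auto
      have "1 * cf_q c (K2+1) \<le> c 0 * cf_q c (K2+1)" using c0 by (intro mult_le_mono1)
      then have P1: "cf_q c (K2+1) \<le> cf_p c (K2+1)" using cb by linarith
      have E3: "b 0 * cf_p c (K2 + 1) + cf_q c (K2 + 1) = 2 * cf_p c (K2 + 1)" using E2 sh2 by simp
      have b01: "b 0 = 1"
      proof (rule ccontr)
        assume "b 0 \<noteq> 1"
        then have "2 * cf_p c (K2+1) \<le> b 0 * cf_p c (K2+1)" using b0 by (intro mult_le_mono1) auto
        then show False using E3 cb by linarith
      qed
      have E4: "cf_q c (K2 + 1) = cf_p c (K2 + 1)" using E3 b01 by simp
      show ?thesis
      proof (cases K2)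
        case 0
        then have "c 0 = 1" using E4 by simp
        then show ?thesis using \<open>K = Suc K1\<close> Suc 0 b01 unfolding c_def b_def by (simp add: numeral_2_eq_2)
      next
        case (Suc K3)
        define d where "d = (\<lambda>i. c (Suc i))"
        have sh3: "cf_p c (K2 + 1) = c 0 * cf_p d (K3 + 1) + cf_q d (K3 + 1)" "cf_q c (K2 + 1) = cf_p d (K3 + 1)"
          using cf_shift[of c "K3 + 1"] Suc unfolding d_def by auto
        have db: "1 \<le> cf_q d (K3+1)"
          using cf_bounds[of "K3+1" d] pos Suc \<open>K1 = Suc K2\<close> \<open>K = Suc K1\<close> unfolding d_def c_def b_def by auto
        have "1 * cf_p d (K3+1) \<le> c 0 * cf_p d (K3+1)" using c0 by (intro mult_le_mono1)
        then have "cf_p d (K3+1) \<le> c 0 * cf_p d (K3+1)" by simp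
        then show ?thesis using E4 sh3 db by linarith
      qed
    qed
  qed
qed

lemma small_ndvd: "4 \<le> (n::nat) \<Longrightarrow> 0 < x \<Longrightarrow> x \<le> 2 \<Longrightarrow> \<not> n dvd x"
proof
  assume "n dvd x" "0 < x" "x \<le> 2" "4 \<le> n"
  then have "n \<le> x" by (intro dvd_imp_le)
  then show False using \<open>x \<le> 2\<close> \<open>4 \<le> n\<close> by linarith
qed

lemma odd_ndvd: "even (n::nat) \<Longrightarrow> \<not> n dvd (m * 2 + 1)"
proof
  assume "even n" "n dvd (m * 2 + 1)"
  then have "2 dvd (m * 2 + 1)" by (rule dvd_trans)
  then show False by simp
qed

lemma even_case:
  assumes "4 \<le> n" "even n"
  shows "infinite_loop_mod n (1/2)"
  unfolding infinite_loop_mod_def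
proof (intro conjI allI impI)
  fix a k m assume "infinite_cf_expansion a (1/2)" "m \<le> a (k + 1) \<and> (k, m) \<noteq> (0, 0)"
  show "\<not> n dvd semiconv_den a k m"
  proof -
    have False by (rule exp_irrat[of a "1/2" 1 2]) (simp_all add: \<open>infinite_cf_expansion a (1/2)\<close>)
    then show ?thesis by simp
  qed
next
  fix a K k m
  assume fin: "finite_cf_expansion a K (1/2)"
    and H: "k \<le> K \<and> (k < K \<longrightarrow> m \<le> a (k + 1)) \<and> (k, m) \<noteq> (0, 0)"
  have q: "cf_q a 0 = 0" "cf_q a 1 = 1" "cf_q a 2 = a 1" "cf_q a 3 = a 2 * a 1 + 1"
    by (simp_all add: numeral_2_eq_2 numeral_3_eq_3)
  from half_class[OF fin] show "\<not> n dvd semiconv_den a k m"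
  proof
    assume K: "K = 1 \<and> a 1 = 2"
    then have "k = 0 \<or> k = 1" using H by auto
    then show ?thesis
    proof
      assume "k = 0"
      then show ?thesis using H K q assms by (intro small_ndvd) (auto simp: semiconv_den_def)
    next
      assume "k = 1"
      then have "semiconv_den a k m = m * 2 + 1" using K q by (simp add: semiconv_den_def)
      then show ?thesis using odd_ndvd assms by simp
    qed
  next
    assume K: "K = 2 \<and> a 1 = 1 \<and> a 2 = 1"
    then have "k = 0 \<or> k = 1 \<or> k = 2" using H by auto
    then show ?thesis
    proof (elim disjE)
      assume "k = 0"
      then show ?thesis using H K q assms by (intro small_ndvd) (auto simp: semiconv_den_def)
    next
      assume "k = 1"
      then show ?thesis using H K q assms by (intro small_ndvd) (auto simp: semiconv_den_def numeral_2_eq_2)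
    next
      assume "k = 2"
      then have "semiconv_den a k m = m * 2 + 1" using K q by (simp add: semiconv_den_def numeral_3_eq_3[symmetric])
      then show ?thesis using odd_ndvd assms by simp
    qed
  qed
qed

lemma suc_mod: "1 < (n::nat) \<Longrightarrow> Suc n mod n = Suc 0"
  using mod_add_self1[of n 1] by simp

lemma mod_step: assumes "X mod n = 1" "Y mod n = 1" "2*d = n - 3" "5 \<le> (n::nat)"
  shows "(2*d*X + 4*Y) mod n = 1"
proof -
  have n1: "n \<noteq> Suc 0" using assms by simp
  have "(2*d*X + 4*Y) mod n = (2*d*1 + 4*1) mod n"
    by (intro mod_add_cong mod_mult_cong) (simp_all add: assms n1)
  also have "\<dots> = (n + 1) mod n" using assms by simp
  also have "\<dots> = 1" using assms suc_mod[of n] by simp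
  finally show ?thesis .
qed

lemma mod_step2: assumes "X mod n = 1" "Y mod n = 1" "m + 2 < (n::nat)"
  shows "(m*X + 2*Y) mod n = m + 2"
proof -
  have n1: "n \<noteq> Suc 0" using assms by simp
  have "(m*X + 2*Y) mod n = (m*1 + 2*1) mod n"
    by (intro mod_add_cong mod_mult_cong) (simp_all add: assms n1)
  also have "\<dots> = m + 2" using assms by simp
  finally show ?thesis .
qed

lemma odd_case:
  assumes "odd n" "5 \<le> n"
  shows "\<exists>\<alpha>::real. \<alpha> > 0 \<and> infinite_loop_mod n \<alpha>"
proof -
  define c where "c = (n + 1) div 2"
  define d where "d = (n - 3) div 2"
  have c2: "2 * c = n + 1" unfolding c_def using assms by presburger
  have d2: "2 * d = n - 3" unfolding d_def using assms by presburger
  define a where "a = (\<lambda>k::nat. if k = 0 then 0 else if k = 1 then c else d)"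
  have apos: "\<forall>k\<ge>1. 1 \<le> a k" unfolding a_def using c2 d2 assms by auto
  obtain \<alpha> where ex: "infinite_cf_expansion a \<alpha>" using exp_exists[OF apos] by blast
  have apos0: "0 < \<alpha>" using exp_bounds[OF ex] unfolding a_def by simp
  have qmod: "(cf_q a (Suc j) * 2^j) mod n = 1 \<and> (cf_q a (Suc (Suc j)) * 2^(Suc j)) mod n = 1" for j
  proof (induction j)
    case 0
    have "cf_q a (Suc (Suc 0)) = c" unfolding a_def by simp
    then show ?case using c2 assms suc_mod[of n] by (simp add: mult.commute)
  next
    case (Suc j)
    have e: "cf_q a (Suc (Suc (Suc j))) = d * cf_q a (Suc (Suc j)) + cf_q a (Suc j)"
      by (simp only: cf_q.simps) (simp add: a_def)
    have "cf_q a (Suc (Suc (Suc j))) * 2 ^ Suc (Suc j)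
        = 2 * d * (cf_q a (Suc (Suc j)) * 2 ^ Suc j) + 4 * (cf_q a (Suc j) * 2 ^ j)"
      unfolding e by (simp only: power_Suc algebra_simps numeral_times_numeral)
    then show ?case using Suc mod_step[of _ n _ d] d2 assms by simp
  qed
  have main: "\<not> n dvd semiconv_den a k m" if H: "m \<le> a (k + 1)" "(k, m) \<noteq> (0, 0)" for k m
  proof (cases k)
    case 0
    then have "semiconv_den a k m = m" unfolding semiconv_den_def by simp
    moreover have "0 < m" "m < n" using H 0 c2 assms unfolding a_def by auto
    ultimately show ?thesis using dvd_imp_le by fastforce
  next
    case (Suc k')
    have md: "m \<le> d" using H Suc unfolding a_def by simp
    have "semiconv_den a k m * 2 ^ Suc k' = m * (cf_q a (Suc (Suc k')) * 2 ^ Suc k') + 2 * (cf_q a (Suc k') * 2 ^ k')"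
    proof -
      have den: "semiconv_den a k m = m * cf_q a (Suc (Suc k')) + cf_q a (Suc k')"
        unfolding semiconv_den_def Suc by (simp del: cf_q.simps)
      have g: "(m * X + Y) * 2 ^ Suc k' = m * (X * 2 ^ Suc k') + 2 * (Y * 2 ^ k')" for X Y :: nat
        by (simp add: algebra_simps)
      show ?thesis unfolding den by (rule g)
    qed
    then have "(semiconv_den a k m * 2 ^ Suc k') mod n = m + 2"
      using mod_step2[of _ n _ m] qmod[of k'] md d2 assms by simp
    moreover have "m + 2 < n" using md d2 assms by linarith
    ultimately show ?thesis by (metis dvd_mult2 dvd_imp_mod_0 add_gr_0 zero_less_numeral less_not_refl)
  qed
  have "infinite_loop_mod n \<alpha>"
    unfolding infinite_loop_mod_def
  proof (intro conjI allI impI)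
    fix b k m assume eb: "infinite_cf_expansion b \<alpha>" and H: "m \<le> b (k + 1) \<and> (k, m) \<noteq> (0, 0)"
    have "b = a" by (rule ext) (rule exp_unique[OF eb ex])
    then show "\<not> n dvd semiconv_den b k m" using main H by simp
  next
    fix b K k m assume fb: "finite_cf_expansion b K \<alpha>"
    then have eq: "\<alpha> = real (cf_p b (K + 1)) / real (cf_q b (K + 1))"
      unfolding finite_cf_expansion_def by simp
    have "cf_q b (K + 1) \<noteq> 0"
    proof
      assume "cf_q b (K + 1) = 0"
      then have "\<alpha> = 0" using eq by simp
      then show False using apos0 by simp
    qed
    then have False using exp_irrat[OF ex eq] by simp
    then show "\<not> n dvd semiconv_den b k m" by simp
  qed
  then show ?thesis using apos0 by blast
qed

theorem mainTheorem7:
  fixes n :: nat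
  assumes "4 \<le> n"
  shows "\<exists>\<alpha>::real. \<alpha> > 0 \<and> infinite_loop_mod n \<alpha>"
proof (cases "even n")
  case True
  then show ?thesis using even_case[OF assms True] by (intro exI[of _ "1/2"]) simp
next
  case False
  then have "5 \<le> n" using assms by presburger
  then show ?thesis using odd_case False by blast
qed

end
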